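(* Let $X$ and $Y$ be uniform spaces and $f\colon X\to Y$ a function that generates the uniform structure on $Y$. Then $f$ is a uniform covering map if and only if $X$ has a base of entourages $E$ such that $E$ evenly covers $f(E)$.
   Context: A uniform structure on a set $X$ is a filter $\mathcal{E}$ of symmetric subsets (entourages) of $X\times X$ containing the diagonal such that every $G_1\in\mathcal{E}$ admits $G\in\mathcal{E}$ with $G^2\subset G_1$, where $G^2=\{(x,z):\exists y,\ (x,y),(y,z)\in G\}$. For $x\in X$ and an entourage $E$, $B(x,E)=\{y:(x,y)\in E\}$. For a function $f\colon X\to Y$ and $E\subset X\times X$, $f(E)=\{(f(x),f(y)):(x,y)\in E\}$. A surjection $f\colon X\to Y$ from a uniform space generates the uniform structure on $Y$ if $\{f(E)\}_E$, $E$ ranging over entourages of $X$, is a base of the uniform structure of $Y$. For a symmetric $E\subset X\times X$ containing the diagonal, the Rips complex $R(X,E)$ is the simplicial complex (weak topology) with vertex set $X$ whose simplices are the finite sets $F\subset X$ with $F\times F\subset E$; $f$ induces the simplicial map $f_E\colon R(X,E)\to R(Y,f(E))$, $\sum t_ix_i\mapsto\sum t_if(x_i)$. A simplicial covering map is a simplicial map that is a topological covering map. $f\colon X\to Y$ is a uniform covering map if it generates the uniform structure on $Y$ and the entourages $E$ of $X$ for which $f_E\colon R(X,E)\to R(Y,f(E))$ is a simplicial covering map form a base of the uniform structure of $X$. A symmetric $E\subset X\times X$ evenly covers $f(E)$ if for every $x\in X$, $f$ maps $B(x,E)$ bijectively onto $B(f(x),f(E))$. *)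

theory Defs
  imports "HOL-Analysis.Analysis"
begin

definition uniform_structure :: "'a set \<Rightarrow> ('a \<times> 'a) set set \<Rightarrow> bool" where
  "uniform_structure X U \<longleftrightarrow>
     (\<forall>E\<in>U. E \<subseteq> X \<times> X \<and> sym E \<and> Id_on X \<subseteq> E) \<and>
     X \<times> X \<in> U \<and>
     (\<forall>E\<in>U. \<forall>E'. E \<subseteq> E' \<and> E' \<subseteq> X \<times> X \<and> sym E' \<longrightarrow> E' \<in> U) \<and>
     (\<forall>E\<in>U. \<forall>E'\<in>U. E \<inter> E' \<in> U) \<and>
     (\<forall>G1\<in>U. \<exists>G\<in>U. G O G \<subseteq> G1)"

definition is_base :: "('a \<times> 'a) set set \<Rightarrow> ('a \<times> 'a) set set \<Rightarrow> bool" where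
  "is_base U B \<longleftrightarrow> B \<subseteq> U \<and> (\<forall>E\<in>U. \<exists>E'\<in>B. E' \<subseteq> E)"

definition pimg :: "('a \<Rightarrow> 'b) \<Rightarrow> ('a \<times> 'a) set \<Rightarrow> ('b \<times> 'b) set" where
  "pimg f E = map_prod f f ` E"

definition uball :: "'a \<Rightarrow> ('a \<times> 'a) set \<Rightarrow> 'a set" where
  "uball x E = {y. (x, y) \<in> E}"

definition generates_uniformity ::
  "'a set \<Rightarrow> ('a \<times> 'a) set set \<Rightarrow> ('a \<Rightarrow> 'b) \<Rightarrow> 'b set \<Rightarrow> ('b \<times> 'b) set set \<Rightarrow> bool" where
  "generates_uniformity X UX f Y UY \<longleftrightarrow> f ` X = Y \<and> is_base UY (pimg f ` UX)"

text \<open>Points of the geometric realization are finitely supported weight functions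
  \<open>t :: 'a \<Rightarrow> real\<close> (t x is the barycentric coordinate of vertex x).\<close>

definition rips_simplex :: "('a \<times> 'a) set \<Rightarrow> 'a set \<Rightarrow> bool" where
  "rips_simplex E F \<longleftrightarrow> finite F \<and> F \<noteq> {} \<and> F \<times> F \<subseteq> E"

definition geo_simplex :: "'a set \<Rightarrow> ('a \<Rightarrow> real) set" where
  "geo_simplex F = {t. (\<forall>x. 0 \<le> t x) \<and> (\<forall>x. x \<notin> F \<longrightarrow> t x = 0) \<and> sum t F = 1}"

definition rips_carrier :: "('a \<times> 'a) set \<Rightarrow> ('a \<Rightarrow> real) set" where
  "rips_carrier E = \<Union>{geo_simplex F | F. rips_simplex E F}"

definition rips_top :: "('a \<times> 'a) set \<Rightarrow> ('a \<Rightarrow> real) topology" where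
  "rips_top E = topology (\<lambda>U. U \<subseteq> rips_carrier E \<and>
      (\<forall>F. rips_simplex E F \<longrightarrow> openin (top_of_set (geo_simplex F)) (U \<inter> geo_simplex F)))"


lemma rips_top_istopology:
  "istopology (\<lambda>U. U \<subseteq> rips_carrier E \<and>
      (\<forall>F. rips_simplex E F \<longrightarrow> openin (top_of_set (geo_simplex F)) (U \<inter> geo_simplex F)))"
  unfolding istopology_def
proof (rule conjI)
  show "\<forall>S T. S \<subseteq> rips_carrier E \<and> (\<forall>F. rips_simplex E F \<longrightarrow> openin (top_of_set (geo_simplex F)) (S \<inter> geo_simplex F)) \<longrightarrow>
        T \<subseteq> rips_carrier E \<and> (\<forall>F. rips_simplex E F \<longrightarrow> openin (top_of_set (geo_simplex F)) (T \<inter> geo_simplex F)) \<longrightarrow>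
        S \<inter> T \<subseteq> rips_carrier E \<and> (\<forall>F. rips_simplex E F \<longrightarrow> openin (top_of_set (geo_simplex F)) (S \<inter> T \<inter> geo_simplex F))"
  proof (intro allI impI conjI)
    fix S T F
    assume S: "S \<subseteq> rips_carrier E \<and> (\<forall>F. rips_simplex E F \<longrightarrow> openin (top_of_set (geo_simplex F)) (S \<inter> geo_simplex F))"
       and T: "T \<subseteq> rips_carrier E \<and> (\<forall>F. rips_simplex E F \<longrightarrow> openin (top_of_set (geo_simplex F)) (T \<inter> geo_simplex F))"
       and F: "rips_simplex E F"
    have "openin (top_of_set (geo_simplex F)) ((S \<inter> geo_simplex F) \<inter> (T \<inter> geo_simplex F))"
      using S T F by blast
    moreover have "(S \<inter> geo_simplex F) \<inter> (T \<inter> geo_simplex F) = S \<inter> T \<inter> geo_simplex F" by blast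
    ultimately show "openin (top_of_set (geo_simplex F)) (S \<inter> T \<inter> geo_simplex F)" by simp
  qed blast
next
  show "\<forall>K. (\<forall>S\<in>K. S \<subseteq> rips_carrier E \<and> (\<forall>F. rips_simplex E F \<longrightarrow> openin (top_of_set (geo_simplex F)) (S \<inter> geo_simplex F))) \<longrightarrow>
        \<Union>K \<subseteq> rips_carrier E \<and> (\<forall>F. rips_simplex E F \<longrightarrow> openin (top_of_set (geo_simplex F)) (\<Union>K \<inter> geo_simplex F))"
  proof (intro allI impI conjI)
    fix K :: "('a \<Rightarrow> real) set set" and F
    assume K: "\<forall>S\<in>K. S \<subseteq> rips_carrier E \<and> (\<forall>F. rips_simplex E F \<longrightarrow> openin (top_of_set (geo_simplex F)) (S \<inter> geo_simplex F))"
    then show "\<Union>K \<subseteq> rips_carrier E" by blast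
    assume F: "rips_simplex E F"
    have "openin (top_of_set (geo_simplex F)) (\<Union>S\<in>K. S \<inter> geo_simplex F)"
      using K F by (intro openin_Union) auto
    moreover have "(\<Union>S\<in>K. S \<inter> geo_simplex F) = \<Union>K \<inter> geo_simplex F" by blast
    ultimately show "openin (top_of_set (geo_simplex F)) (\<Union>K \<inter> geo_simplex F)" by simp
  qed
qed

text \<open>the induced simplicial map  sum t_i x_i \<mapsto> sum t_i f(x_i)\<close>
definition rips_map :: "('a \<Rightarrow> 'b) \<Rightarrow> ('a \<Rightarrow> real) \<Rightarrow> ('b \<Rightarrow> real)" where
  "rips_map f t = (\<lambda>y. \<Sum>x\<in>{x. t x \<noteq> 0 \<and> f x = y}. t x)"

definition covering_map_top :: "'a topology \<Rightarrow> 'b topology \<Rightarrow> ('a \<Rightarrow> 'b) \<Rightarrow> bool" where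
  "covering_map_top T S p \<longleftrightarrow>
     continuous_map T S p \<and> p ` topspace T = topspace S \<and>
     (\<forall>y\<in>topspace S. \<exists>W. y \<in> W \<and> openin S W \<and>
        (\<exists>V. \<Union>V = topspace T \<inter> p -` W \<and> (\<forall>u\<in>V. openin T u) \<and> pairwise disjnt V \<and>
             (\<forall>u\<in>V. homeomorphic_map (subtopology T u) (subtopology S W) p)))"

definition simplicial_covering :: "('a \<Rightarrow> 'b) \<Rightarrow> ('a \<times> 'a) set \<Rightarrow> bool" where
  "simplicial_covering f E \<longleftrightarrow> covering_map_top (rips_top E) (rips_top (pimg f E)) (rips_map f)"

definition uniform_covering_map ::
  "'a set \<Rightarrow> ('a \<times> 'a) set set \<Rightarrow> ('a \<Rightarrow> 'b) \<Rightarrow> 'b set \<Rightarrow> ('b \<times> 'b) set set \<Rightarrow> bool" where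
  "uniform_covering_map X UX f Y UY \<longleftrightarrow>
     generates_uniformity X UX f Y UY \<and> is_base UX {E \<in> UX. simplicial_covering f E}"

definition evenly_covers :: "'a set \<Rightarrow> ('a \<Rightarrow> 'b) \<Rightarrow> ('a \<times> 'a) set \<Rightarrow> bool" where
  "evenly_covers X f E \<longleftrightarrow> (\<forall>x\<in>X. bij_betw f (uball x E) (uball (f x) (pimg f E)))"

end

theory Submission
  imports Defs
begin


lemma openin_rips: "openin (rips_top E) U \<longleftrightarrow> U \<subseteq> rips_carrier E \<and>
      (\<forall>F. rips_simplex E F \<longrightarrow> openin (top_of_set (geo_simplex F)) (U \<inter> geo_simplex F))"
  unfolding rips_top_def using rips_top_istopology[of E] by simp

lemma geo_sub_carrier: "rips_simplex E F \<Longrightarrow> geo_simplex F \<subseteq> rips_carrier E"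
  unfolding rips_carrier_def by blast

lemma carrier_open: "openin (rips_top E) (rips_carrier E)"
proof -
  have "rips_carrier E \<inter> geo_simplex F = geo_simplex F" if "rips_simplex E F" for F
    using geo_sub_carrier[OF that] by blast
  then show ?thesis by (simp add: openin_rips)
qed

lemma topspace_rips [simp]: "topspace (rips_top E) = rips_carrier E"
  using carrier_open[of E] openin_subset[of "rips_top E"] openin_rips
  by (metis openin_topspace subset_antisym)

lemma carrierE: "t \<in> rips_carrier E \<Longrightarrow> (\<And>F. rips_simplex E F \<Longrightarrow> t \<in> geo_simplex F \<Longrightarrow> P) \<Longrightarrow> P"
  unfolding rips_carrier_def by blast

lemma path_in_open:
  fixes \<gamma> :: "real \<Rightarrow> 'c::topological_space"
  assumes "openin (top_of_set S) U" "continuous_on UNIV \<gamma>" "\<gamma> 0 \<in> U"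
  shows "\<exists>d>0. \<forall>e. 0 \<le> e \<and> e < d \<and> \<gamma> e \<in> S \<longrightarrow> \<gamma> e \<in> U"
proof -
  obtain T where T: "open T" "U = S \<inter> T" using assms(1) by (auto simp: openin_open)
  have "open (\<gamma> -` T)" using assms(2) T(1) by (simp add: open_vimage)
  moreover have "0 \<in> \<gamma> -` T" using assms(3) T by auto
  ultimately obtain d where "d > 0" "ball 0 d \<subseteq> \<gamma> -` T" using open_contains_ball by blast
  then have "\<gamma> e \<in> T" if "0 \<le> e" "e < d" for e
    using that by (auto simp: subset_eq dist_real_def)
  then show ?thesis using T \<open>d>0\<close> by (intro exI[of _ d]) auto
qed

lemma cont_crit:
  assumes W: "openin (rips_top L) W"
    and H: "\<And>G. rips_simplex L G \<Longrightarrow> \<exists>F. rips_simplex K F \<and> h ` (W \<inter> geo_simplex G) \<subseteq> geo_simplex F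
              \<and> continuous_on (W \<inter> geo_simplex G) h"
  shows "continuous_map (subtopology (rips_top L) W) (rips_top K) h"
proof -
  have Wc: "W \<subseteq> rips_carrier L" using W openin_rips by blast
  have img: "h s \<in> rips_carrier K" if "s \<in> W" for s
  proof -
    from that Wc obtain G where G: "rips_simplex L G" "s \<in> geo_simplex G" by (auto elim: carrierE)
    from H[OF G(1)] obtain F where "rips_simplex K F" "h ` (W \<inter> geo_simplex G) \<subseteq> geo_simplex F" by blast
    then show ?thesis using G that geo_sub_carrier by blast
  qed
  have op: "openin (rips_top L) {s \<in> W. h s \<in> U}" if U: "openin (rips_top K) U" for U
    unfolding openin_rips
  proof (intro conjI allI impI)
    show "{s \<in> W. h s \<in> U} \<subseteq> rips_carrier L" using Wc by blast
    fix G assume G: "rips_simplex L G"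
    from H[OF G] obtain F where F: "rips_simplex K F" "h ` (W \<inter> geo_simplex G) \<subseteq> geo_simplex F"
      "continuous_on (W \<inter> geo_simplex G) h" by blast
    have UF: "openin (top_of_set (geo_simplex F)) (U \<inter> geo_simplex F)" using U F(1) openin_rips by blast
    have "openin (top_of_set (W \<inter> geo_simplex G)) ((W \<inter> geo_simplex G) \<inter> h -` (U \<inter> geo_simplex F))"
      using continuous_on_open_gen[of h "W \<inter> geo_simplex G" "geo_simplex F"] F UF by blast
    moreover have "openin (top_of_set (geo_simplex G)) (W \<inter> geo_simplex G)" using W G openin_rips by blast
    ultimately have "openin (top_of_set (geo_simplex G)) ((W \<inter> geo_simplex G) \<inter> h -` (U \<inter> geo_simplex F))"
      using openin_trans by blast
    moreover have "(W \<inter> geo_simplex G) \<inter> h -` (U \<inter> geo_simplex F) = {s \<in> W. h s \<in> U} \<inter> geo_simplex G"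
      using F(2) by blast
    ultimately show "openin (top_of_set (geo_simplex G)) ({s \<in> W. h s \<in> U} \<inter> geo_simplex G)" by simp
  qed
  show ?thesis unfolding continuous_map_def
  proof (intro conjI allI impI)
    show "h \<in> topspace (subtopology (rips_top L) W) \<rightarrow> topspace (rips_top K)" using img by auto
    fix U assume "openin (rips_top K) U"
    then have "openin (rips_top L) {s \<in> W. h s \<in> U}" by (rule op)
    moreover have "{x \<in> topspace (subtopology (rips_top L) W). h x \<in> U} = {s \<in> W. h s \<in> U} \<inter> W"
      using Wc by auto
    ultimately show "openin (subtopology (rips_top L) W) {x \<in> topspace (subtopology (rips_top L) W). h x \<in> U}"
      unfolding openin_subtopology by blast
  qed
qed

lemma rips_map_eq:
  assumes "finite F" "\<And>z. z \<notin> F \<Longrightarrow> t z = 0"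
  shows "rips_map f t y = (\<Sum>z\<in>{z\<in>F. f z = y}. t z)"
  unfolding rips_map_def
  by (rule sum.mono_neutral_left) (use assms in auto)

lemma pF_cont: "continuous_on UNIV (\<lambda>t. \<lambda>y. (\<Sum>z\<in>{z\<in>F. f z = y}. (t z::real)))"
  by (intro continuous_on_coordinatewise_then_product continuous_on_sum) simp

lemma geo_simplexD:
  assumes "t \<in> geo_simplex F"
  shows "\<And>x. 0 \<le> t x" "\<And>x. x \<notin> F \<Longrightarrow> t x = 0" "sum t F = 1"
  using assms unfolding geo_simplex_def by auto

lemma rips_map_geo:
  assumes F: "rips_simplex E F" and t: "t \<in> geo_simplex F"
  shows "rips_map f t \<in> geo_simplex (f ` F)" "rips_simplex (pimg f E) (f ` F)"
proof -
  have fin: "finite F" using F by (simp add: rips_simplex_def)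
  note eq = rips_map_eq[OF fin geo_simplexD(2)[OF t]]
  have "f ` F \<times> f ` F \<subseteq> pimg f E"
  proof clarify
    fix a b assume "a \<in> F" "b \<in> F"
    then have "(a,b) \<in> E" using F by (auto simp: rips_simplex_def)
    then show "(f a, f b) \<in> pimg f E" unfolding pimg_def by force
  qed
  then show "rips_simplex (pimg f E) (f ` F)" using F
    unfolding rips_simplex_def by auto
  have "sum (rips_map f t) (f ` F) = sum t F"
    by (simp add: eq sum.image_gen[OF fin, of t f])
  then show "rips_map f t \<in> geo_simplex (f ` F)"
    unfolding geo_simplex_def using geo_simplexD[OF t]
    by (auto simp: eq intro!: sum_nonneg) (metis (mono_tags, lifting) empty_Collect_eq image_eqI sum.empty)
qed

definition st :: "('a \<times> 'a) set \<Rightarrow> 'a \<Rightarrow> ('a \<Rightarrow> real) set" where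
  "st E x = {t \<in> rips_carrier E. 0 < t x}"

lemma st_open: "openin (rips_top E) (st E x)"
  unfolding openin_rips
proof (intro conjI allI impI)
  show "st E x \<subseteq> rips_carrier E" by (auto simp: st_def)
  fix F assume F: "rips_simplex E F"
  have "open {t::'a\<Rightarrow>real. 0 < t x}"
    by (rule open_Collect_less) (auto intro: continuous_on_product_coordinates)
  then have "openin (top_of_set (geo_simplex F)) (geo_simplex F \<inter> {t. 0 < t x})" by blast
  moreover have "geo_simplex F \<inter> {t. 0 < t x} = st E x \<inter> geo_simplex F"
    using geo_sub_carrier[OF F] by (auto simp: st_def)
  ultimately show "openin (top_of_set (geo_simplex F)) (st E x \<inter> geo_simplex F)" by simp
qed




definition sig :: "('a \<times> 'a) set \<Rightarrow> ('a \<Rightarrow> 'b) \<Rightarrow> 'a \<Rightarrow> ('b \<Rightarrow> real) \<Rightarrow> ('a \<Rightarrow> real)" where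
  "sig E f x s = (\<lambda>z. if (x,z) \<in> E then s (f z) else 0)"

lemma sig_cont: "continuous_on UNIV (sig E f x)"
  unfolding sig_def proof (intro continuous_on_coordinatewise_then_product)
  fix i show "continuous_on UNIV (\<lambda>s. if (x, i) \<in> E then s (f i) else (0::real))" by (cases "(x,i) \<in> E") simp_all
qed

lemma simplex_sub: "rips_simplex E F \<Longrightarrow> a \<in> F \<Longrightarrow> b \<in> F \<Longrightarrow> (a,b) \<in> E"
  unfolding rips_simplex_def by auto


locale evc =
  fixes X :: "'a set" and f :: "'a \<Rightarrow> 'b" and E E' :: "('a \<times> 'a) set"
  assumes EX: "E \<subseteq> X \<times> X" and symE: "sym E" and IdE: "Id_on X \<subseteq> E"
    and EE: "E O E \<subseteq> E'" and ev: "evenly_covers X f E" and ev': "evenly_covers X f E'"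
begin

lemma inj_ball: "x \<in> X \<Longrightarrow> inj_on f (uball x E)"
  using ev unfolding evenly_covers_def bij_betw_def by blast

lemma inj_ball': "x \<in> X \<Longrightarrow> inj_on f (uball x E')"
  using ev' unfolding evenly_covers_def bij_betw_def by blast

lemma ball_img: "x \<in> X \<Longrightarrow> f ` uball x E = uball (f x) (pimg f E)"
  using ev unfolding evenly_covers_def bij_betw_def by blast

lemma inE: "(a,b) \<in> E \<Longrightarrow> a \<in> X \<and> b \<in> X"
  using EX by auto

lemma E_sub_E': "E \<subseteq> E'"
proof
  fix p assume p: "p \<in> E"
  obtain a b where ab: "p = (a,b)" by (cases p)
  then have "(b,b) \<in> E" using inE p IdE by (auto simp: Id_on_def)
  then show "p \<in> E'" using EE p ab by blast
qed

lemma inj_E: "(a,b) \<in> E \<Longrightarrow> (a,c) \<in> E \<Longrightarrow> f b = f c \<Longrightarrow> b = c"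
  using inj_ball[of a] inE by (auto simp: uball_def inj_on_def)

definition lift where "lift x G = {z. (x,z) \<in> E \<and> f z \<in> G}"

lemma lift_props:
  assumes x: "x \<in> X" and G: "G \<times> G \<subseteq> pimg f E" and fx: "f x \<in> G"
  shows "f ` lift x G = G" "inj_on f (lift x G)" "lift x G \<times> lift x G \<subseteq> E" "x \<in> lift x G"
proof -
  show "x \<in> lift x G" using x fx IdE by (auto simp: lift_def Id_on_def)
  show "inj_on f (lift x G)" using inj_ball[OF x] by (rule inj_on_subset) (auto simp: lift_def uball_def)
  show "f ` lift x G = G"
  proof
    show "f ` lift x G \<subseteq> G" by (auto simp: lift_def)
    show "G \<subseteq> f ` lift x G"
    proof
      fix g assume g: "g \<in> G"
      then have "g \<in> uball (f x) (pimg f E)" using G fx by (auto simp: uball_def)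
      then obtain z where "z \<in> uball x E" "f z = g" using ball_img[OF x] by (metis imageE)
      then show "g \<in> f ` lift x G" using g by (auto simp: lift_def uball_def)
    qed
  qed
  show "lift x G \<times> lift x G \<subseteq> E"
  proof clarify
    fix a b assume a: "a \<in> lift x G" and b: "b \<in> lift x G"
    have xa: "(x,a) \<in> E" and xb: "(x,b) \<in> E" using a b by (auto simp: lift_def)
    have aX: "a \<in> X" using inE[OF xa] by simp
    have "(f a, f b) \<in> pimg f E" using a b G by (auto simp: lift_def)
    then have "f b \<in> uball (f a) (pimg f E)" by (simp add: uball_def)
    then have "f b \<in> f ` uball a E" using ball_img[OF aX] by simp
    then obtain c where c: "(a,c) \<in> E" "f c = f b" by (auto simp: uball_def)
    have "(a,x) \<in> E" using xa symE by (auto simp: sym_def)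
    then have "(a,b) \<in> E'" using xb EE by blast
    moreover have "(a,c) \<in> E'" using c E_sub_E' by blast
    ultimately have "c = b" using inj_ball'[OF aX] c(2) by (auto simp: uball_def inj_on_def)
    then show "(a,b) \<in> E" using c by simp
  qed
qed

lemma lift_simplex:
  assumes x: "x \<in> X" and G: "rips_simplex (pimg f E) G" and fx: "f x \<in> G"
  shows "rips_simplex E (lift x G)"
proof -
  have GG: "G \<times> G \<subseteq> pimg f E" using G by (simp add: rips_simplex_def)
  note L = lift_props[OF x GG fx]
  have "finite (lift x G)" using L(1,2) G by (metis finite_imageD rips_simplex_def)
  then show ?thesis using L by (auto simp: rips_simplex_def)
qed

lemma sig_geo:
  assumes x: "x \<in> X" and G: "rips_simplex (pimg f E) G" and fx: "f x \<in> G" and s: "s \<in> geo_simplex G"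
  shows "sig E f x s \<in> geo_simplex (lift x G)" "rips_map f (sig E f x s) = s" "sig E f x s x = s (f x)"
proof -
  have GG: "G \<times> G \<subseteq> pimg f E" using G by (simp add: rips_simplex_def)
  note L = lift_props[OF x GG fx]
  have fin: "finite (lift x G)" using lift_simplex[OF x G fx] by (simp add: rips_simplex_def)
  note sD = geo_simplexD[OF s]
  have zero: "sig E f x s z = 0" if "z \<notin> lift x G" for z
  proof (cases "(x,z) \<in> E")
    case True
    then have "f z \<notin> G" using that by (simp add: lift_def)
    then show ?thesis using True sD(2) by (simp add: sig_def)
  qed (simp add: sig_def)
  have "sum (sig E f x s) (lift x G) = sum (\<lambda>z. s (f z)) (lift x G)"
    by (rule sum.cong) (auto simp: sig_def lift_def)
  also have "\<dots> = sum s (f ` lift x G)" using sum.reindex[OF L(2), of s] by simp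
  also have "\<dots> = 1" using L(1) sD(3) by simp
  finally have sum1: "sum (sig E f x s) (lift x G) = 1" .
  moreover have "0 \<le> sig E f x s z" for z using sD(1) by (simp add: sig_def)
  ultimately show "sig E f x s \<in> geo_simplex (lift x G)"
    unfolding geo_simplex_def using zero by blast
  have "(x,x) \<in> E" using x IdE by (auto simp: Id_on_def)
  then show "sig E f x s x = s (f x)" by (simp add: sig_def)
  show "rips_map f (sig E f x s) = s"
  proof (rule ext)
    fix y
    have "rips_map f (sig E f x s) y = (\<Sum>z\<in>{z\<in>lift x G. f z = y}. sig E f x s z)"
      by (rule rips_map_eq[OF fin zero])
    also have "\<dots> = s y"
    proof (cases "y \<in> G")
      case True
      then have "y \<in> f ` lift x G" using L(1) by simp
      then obtain z0 where z0: "z0 \<in> lift x G" "f z0 = y" by (rule imageE) simp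
      have "{z\<in>lift x G. f z = y} = {z0}"
      proof (intro equalityI subsetI)
        fix z assume "z \<in> {z\<in>lift x G. f z = y}"
        then have zz: "z \<in> lift x G" "f z = f z0" using z0 by auto
        have "z = z0" by (rule inj_onD[OF L(2) zz(2) zz(1) z0(1)])
        then show "z \<in> {z0}" by simp
      qed (use z0 in auto)
      moreover have "sig E f x s z0 = s y" using z0 by (simp add: sig_def lift_def)
      ultimately show ?thesis by simp
    next
      case False
      then have e: "{z\<in>lift x G. f z = y} = {}" unfolding lift_def by blast
      have "s y = 0" using False sD(2) by blast
      then show ?thesis unfolding e by simp
    qed
    finally show "rips_map f (sig E f x s) y = s y" .
  qed
qed

lemma sig_p:
  assumes x: "x \<in> X" and t: "t \<in> st E x"
  shows "sig E f x (rips_map f t) = t"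
proof -
  obtain F where F: "rips_simplex E F" "t \<in> geo_simplex F" using t by (auto simp: st_def elim: carrierE)
  note tD = geo_simplexD[OF F(2)]
  have fin: "finite F" using F by (simp add: rips_simplex_def)
  have xF: "x \<in> F" using t tD(2) by (force simp: st_def)
  show ?thesis
  proof (rule ext)
    fix z
    show "sig E f x (rips_map f t) z = t z"
    proof (cases "(x,z) \<in> E")
      case True
      have eq: "rips_map f t (f z) = (\<Sum>w\<in>{w\<in>F. f w = f z}. t w)" by (rule rips_map_eq[OF fin tD(2)])
      have "{w\<in>F. f w = f z} \<subseteq> {z}"
      proof
        fix w assume w: "w \<in> {w\<in>F. f w = f z}"
        then have "(x,w) \<in> E" using simplex_sub[OF F(1) xF] by blast
        then have "z = w" using inj_E[OF True] w by simp
        then show "w \<in> {z}" by simp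
      qed
      then have "{w\<in>F. f w = f z} = {} \<and> z \<notin> F \<or> {w\<in>F. f w = f z} = {z}" by blast
      then have "rips_map f t (f z) = t z"
      proof
        assume a: "{w\<in>F. f w = f z} = {} \<and> z \<notin> F"
        then show ?thesis using eq tD(2)[of z] by (simp only: a sum.empty) simp
      next
        assume a: "{w\<in>F. f w = f z} = {z}"
        show ?thesis using eq by (simp only: a) simp
      qed
      then show ?thesis using True by (simp add: sig_def)
    next
      case False
      then have "z \<notin> F" using simplex_sub[OF F(1) xF] by auto
      then show ?thesis using False tD(2) by (simp add: sig_def)
    qed
  qed
qed


end


lemma p_cont_on: "finite F \<Longrightarrow> continuous_on (geo_simplex F) (rips_map f)"
proof -
  assume fin: "finite F"
  have "continuous_on (geo_simplex F) (\<lambda>t. \<lambda>y. (\<Sum>z\<in>{z\<in>F. f z = y}. (t z::real)))"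
    by (rule continuous_on_subset[OF pF_cont]) simp
  moreover have "(\<lambda>y. (\<Sum>z\<in>{z\<in>F. f z = y}. (t z::real))) = rips_map f t" if "t \<in> geo_simplex F" for t
  proof (rule ext)
    fix y show "(\<Sum>z\<in>{z\<in>F. f z = y}. (t z::real)) = rips_map f t y"
      by (rule rips_map_eq[OF fin geo_simplexD(2)[OF that], symmetric])
  qed
  ultimately show ?thesis by (rule continuous_on_eq)
qed

lemma simplex_img: "rips_simplex E F \<Longrightarrow> rips_simplex (pimg f E) (f ` F)"
proof -
  assume F: "rips_simplex E F"
  have "f ` F \<times> f ` F \<subseteq> pimg f E"
  proof clarify
    fix a b assume "a \<in> F" "b \<in> F"
    then have "(a,b) \<in> E" using F by (auto simp: rips_simplex_def)
    then show "(f a, f b) \<in> pimg f E" unfolding pimg_def by force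
  qed
  then show "rips_simplex (pimg f E) (f ` F)" using F
    unfolding rips_simplex_def by auto
qed

lemma p_continuous:
  assumes W: "openin (rips_top E) W"
  shows "continuous_map (subtopology (rips_top E) W) (rips_top (pimg f E)) (rips_map f)"
proof (rule cont_crit[OF W])
  fix F assume F: "rips_simplex E F"
  have fin: "finite F" using F by (simp add: rips_simplex_def)
  show "\<exists>G. rips_simplex (pimg f E) G \<and> rips_map f ` (W \<inter> geo_simplex F) \<subseteq> geo_simplex G \<and>
        continuous_on (W \<inter> geo_simplex F) (rips_map f)"
  proof (intro exI conjI)
    show "rips_simplex (pimg f E) (f ` F)" by (rule simplex_img[OF F])
    show "rips_map f ` (W \<inter> geo_simplex F) \<subseteq> geo_simplex (f ` F)"
      using rips_map_geo(1)[OF F] by blast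
    show "continuous_on (W \<inter> geo_simplex F) (rips_map f)"
      by (rule continuous_on_subset[OF p_cont_on[OF fin]]) blast
  qed
qed

lemma st_map:
  assumes t: "t \<in> st E x"
  shows "rips_map f t \<in> st (pimg f E) (f x)"
proof -
  obtain F where F: "rips_simplex E F" "t \<in> geo_simplex F" using t by (auto simp: st_def elim: carrierE)
  note tD = geo_simplexD[OF F(2)]
  have fin: "finite F" using F by (simp add: rips_simplex_def)
  have xF: "x \<in> F" using t tD(2) by (force simp: st_def)
  have "t x \<le> (\<Sum>z\<in>{z\<in>F. f z = f x}. t z)"
    by (rule member_le_sum) (use xF fin tD(1) in auto)
  then have "0 < rips_map f t (f x)" using t rips_map_eq[OF fin tD(2), where y="f x" and f=f] by (simp add: st_def)
  moreover have "rips_map f t \<in> rips_carrier (pimg f E)"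
    using rips_map_geo[OF F] geo_sub_carrier by blast
  ultimately show ?thesis by (simp add: st_def)
qed





context evc begin

lemma sig_cont_map:
  assumes x: "x \<in> X"
  shows "continuous_map (subtopology (rips_top (pimg f E)) (st (pimg f E) (f x))) (rips_top E) (sig E f x)"
proof (rule cont_crit[OF st_open])
  fix G assume G: "rips_simplex (pimg f E) G"
  show "\<exists>F. rips_simplex E F \<and> sig E f x ` (st (pimg f E) (f x) \<inter> geo_simplex G) \<subseteq> geo_simplex F \<and>
        continuous_on (st (pimg f E) (f x) \<inter> geo_simplex G) (sig E f x)"
  proof (cases "f x \<in> G")
    case True
    show ?thesis
    proof (intro exI conjI)
      show "rips_simplex E (lift x G)" by (rule lift_simplex[OF x G True])
      show "sig E f x ` (st (pimg f E) (f x) \<inter> geo_simplex G) \<subseteq> geo_simplex (lift x G)"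
        using sig_geo(1)[OF x G True] by blast
      show "continuous_on (st (pimg f E) (f x) \<inter> geo_simplex G) (sig E f x)"
        by (rule continuous_on_subset[OF sig_cont]) simp
    qed
  next
    case False
    have e: "st (pimg f E) (f x) \<inter> geo_simplex G = {}"
    proof -
      have "s (f x) = 0" if "s \<in> geo_simplex G" for s using geo_simplexD(2)[OF that False] .
      then show ?thesis unfolding st_def by force
    qed
    have "(x,x) \<in> E" using x IdE by (auto simp: Id_on_def)
    then have "rips_simplex E {x}" by (simp add: rips_simplex_def)
    then show ?thesis unfolding e by (intro exI[of _ "{x}"]) auto
  qed
qed

lemma fx_in:
  assumes s: "s \<in> st (pimg f E) y"
  obtains G where "rips_simplex (pimg f E) G" "s \<in> geo_simplex G" "y \<in> G"
proof -
  obtain G where G: "rips_simplex (pimg f E) G" "s \<in> geo_simplex G"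
    using s unfolding st_def by (blast elim: carrierE)
  have "0 < s y" using s by (simp add: st_def)
  then have "y \<in> G" using geo_simplexD(2)[OF G(2), of y] by (cases "y \<in> G") simp_all
  then show ?thesis using that G by blast
qed

lemma homeo:
  assumes x: "x \<in> X"
  shows "homeomorphic_maps (subtopology (rips_top E) (st E x)) (subtopology (rips_top (pimg f E)) (st (pimg f E) (f x)))
           (rips_map f) (sig E f x)"
  unfolding homeomorphic_maps_def
proof (intro conjI ballI)
  have "rips_map f \<in> topspace (subtopology (rips_top E) (st E x)) \<rightarrow> st (pimg f E) (f x)"
  proof (rule Pi_I)
    fix t assume "t \<in> topspace (subtopology (rips_top E) (st E x))"
    then have "t \<in> st E x" by simp
    then show "rips_map f t \<in> st (pimg f E) (f x)" by (rule st_map)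
  qed
  then show "continuous_map (subtopology (rips_top E) (st E x)) (subtopology (rips_top (pimg f E)) (st (pimg f E) (f x))) (rips_map f)"
    by (rule continuous_map_into_subtopology[OF p_continuous[OF st_open]])
  have sst: "sig E f x s \<in> st E x" if s: "s \<in> st (pimg f E) (f x)" for s
  proof -
    obtain G where G: "rips_simplex (pimg f E) G" "s \<in> geo_simplex G" "f x \<in> G" using fx_in[OF s] by blast
    note S = sig_geo[OF x G(1) G(3) G(2)]
    have "sig E f x s \<in> rips_carrier E" using S(1) geo_sub_carrier[OF lift_simplex[OF x G(1) G(3)]] by blast
    then show ?thesis using S(3) s by (simp add: st_def)
  qed
  have "sig E f x \<in> topspace (subtopology (rips_top (pimg f E)) (st (pimg f E) (f x))) \<rightarrow> st E x"
  proof (rule Pi_I)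
    fix t assume "t \<in> topspace (subtopology (rips_top (pimg f E)) (st (pimg f E) (f x)))"
    then have "t \<in> st (pimg f E) (f x)" by simp
    then show "sig E f x t \<in> st E x" by (rule sst)
  qed
  then show "continuous_map (subtopology (rips_top (pimg f E)) (st (pimg f E) (f x))) (subtopology (rips_top E) (st E x)) (sig E f x)"
    by (rule continuous_map_into_subtopology[OF sig_cont_map[OF x]])
  fix t assume "t \<in> topspace (subtopology (rips_top E) (st E x))"
  then have "t \<in> st E x" by simp
  then show "sig E f x (rips_map f t) = t" by (rule sig_p[OF x])
next
  fix s assume "s \<in> topspace (subtopology (rips_top (pimg f E)) (st (pimg f E) (f x)))"
  then have s: "s \<in> st (pimg f E) (f x)" by simp
  obtain G where G: "rips_simplex (pimg f E) G" "s \<in> geo_simplex G" "f x \<in> G" using fx_in[OF s] by blast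
  show "rips_map f (sig E f x s) = s" by (rule sig_geo(2)[OF x G(1) G(3) G(2)])
qed

end



context evc begin

lemma base_pt:
  assumes G: "rips_simplex (pimg f E) G" and g: "g \<in> G"
  shows "\<exists>x\<in>X. f x = g"
proof -
  have "(g,g) \<in> pimg f E" using G g by (auto simp: rips_simplex_def)
  then obtain a b where "(a,b) \<in> E" "f a = g" unfolding pimg_def by auto
  then show ?thesis using inE by blast
qed

lemma pos_coord:
  assumes s: "s \<in> geo_simplex G"
  shows "\<exists>y\<in>G. 0 < s y"
proof (rule ccontr)
  assume "\<not> ?thesis"
  then have "\<forall>y\<in>G. s y = 0"
  proof (intro ballI)
    fix y assume "\<not> (\<exists>y\<in>G. 0 < s y)" "y \<in> G"
    then have "\<not> 0 < s y" by blast
    then show "s y = 0" using geo_simplexD(1)[OF s, of y] by simp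
  qed
  then have "sum s G = 0" by simp
  then show False using geo_simplexD(3)[OF s] by simp
qed

lemma covering: "simplicial_covering f E"
  unfolding simplicial_covering_def covering_map_top_def
proof (intro conjI ballI)
  have "subtopology (rips_top E) (rips_carrier E) = rips_top E" by (metis subtopology_topspace topspace_rips)
  then show "continuous_map (rips_top E) (rips_top (pimg f E)) (rips_map f)"
    using p_continuous[OF carrier_open[of E], of f] by simp
  show "rips_map f ` topspace (rips_top E) = topspace (rips_top (pimg f E))"
  proof
    show "rips_map f ` topspace (rips_top E) \<subseteq> topspace (rips_top (pimg f E))"
    proof clarify
      fix t assume "t \<in> topspace (rips_top E)"
      then obtain F where F: "rips_simplex E F" "t \<in> geo_simplex F" by (auto elim: carrierE)
      show "rips_map f t \<in> topspace (rips_top (pimg f E))"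
        using rips_map_geo[OF F] geo_sub_carrier by fastforce
    qed
    show "topspace (rips_top (pimg f E)) \<subseteq> rips_map f ` topspace (rips_top E)"
    proof
      fix s assume "s \<in> topspace (rips_top (pimg f E))"
      then obtain G where G: "rips_simplex (pimg f E) G" "s \<in> geo_simplex G" by (auto elim: carrierE)
      obtain g where g: "g \<in> G" using G(1) by (auto simp: rips_simplex_def)
      obtain x where x: "x \<in> X" "f x = g" using base_pt[OF G(1) g] by blast
      have fx: "f x \<in> G" using x g by simp
      note S = sig_geo[OF x(1) G(1) fx G(2)]
      have "sig E f x s \<in> topspace (rips_top E)"
        using S(1) geo_sub_carrier[OF lift_simplex[OF x(1) G(1) fx]] by auto
      then show "s \<in> rips_map f ` topspace (rips_top E)" using S(2) by (metis image_eqI)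
    qed
  qed
  fix s assume "s \<in> topspace (rips_top (pimg f E))"
  then have sc: "s \<in> rips_carrier (pimg f E)" by simp
  then obtain G where G: "rips_simplex (pimg f E) G" "s \<in> geo_simplex G" by (auto elim: carrierE)
  obtain y where y: "y \<in> G" "0 < s y" using pos_coord[OF G(2)] by blast
  obtain x0 where x0: "x0 \<in> X" "f x0 = y" using base_pt[OF G(1) y(1)] by blast
  define W where "W = st (pimg f E) y"
  define V where "V = (\<lambda>x. st E x) ` {x\<in>X. f x = y}"
  show "\<exists>W. s \<in> W \<and> openin (rips_top (pimg f E)) W \<and>
         (\<exists>V. \<Union>V = topspace (rips_top E) \<inter> rips_map f -` W \<and> (\<forall>u\<in>V. openin (rips_top E) u) \<and>
              pairwise disjnt V \<and> (\<forall>u\<in>V. homeomorphic_map (subtopology (rips_top E) u) (subtopology (rips_top (pimg f E)) W) (rips_map f)))"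
  proof (intro exI conjI)
    show "s \<in> W" using sc y by (simp add: W_def st_def)
    show "openin (rips_top (pimg f E)) W" unfolding W_def by (rule st_open)
    show "\<forall>u\<in>V. openin (rips_top E) u" unfolding V_def by (simp add: st_open)
    show "\<forall>u\<in>V. homeomorphic_map (subtopology (rips_top E) u) (subtopology (rips_top (pimg f E)) W) (rips_map f)"
      unfolding V_def W_def using homeo homeomorphic_maps_imp_map by blast
    show "\<Union>V = topspace (rips_top E) \<inter> rips_map f -` W"
    proof
      show "\<Union>V \<subseteq> topspace (rips_top E) \<inter> rips_map f -` W"
      proof
        fix t assume "t \<in> \<Union>V"
        then obtain x where x: "x \<in> X" "f x = y" "t \<in> st E x" unfolding V_def by blast
        then have "rips_map f t \<in> W" using st_map[OF x(3), of f] by (simp add: W_def)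
        moreover have "t \<in> topspace (rips_top E)" using x(3) by (simp add: st_def)
        ultimately show "t \<in> topspace (rips_top E) \<inter> rips_map f -` W" by blast
      qed
      show "topspace (rips_top E) \<inter> rips_map f -` W \<subseteq> \<Union>V"
      proof
        fix t assume t: "t \<in> topspace (rips_top E) \<inter> rips_map f -` W"
        then obtain F where F: "rips_simplex E F" "t \<in> geo_simplex F" by (auto elim: carrierE)
        note tD = geo_simplexD[OF F(2)]
        have fin: "finite F" using F by (simp add: rips_simplex_def)
        have "0 < rips_map f t y" using t by (simp add: W_def st_def)
        then have pos: "0 < (\<Sum>z\<in>{z\<in>F. f z = y}. t z)" using rips_map_eq[OF fin tD(2), where f=f and y=y] by simp
        have "\<exists>z\<in>{z\<in>F. f z = y}. t z \<noteq> 0"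
        proof (rule ccontr)
          assume "\<not> ?thesis"
          then have "(\<Sum>z\<in>{z\<in>F. f z = y}. t z) = 0" by simp
          then show False using pos by simp
        qed
        then obtain z where z: "z \<in> F" "f z = y" "t z \<noteq> 0" by blast
        have "z \<in> X" using simplex_sub[OF F(1) z(1) z(1)] inE by blast
        moreover have "t \<in> st E z" using t z(3) tD(1)[of z] by (auto simp: st_def less_le)
        ultimately show "t \<in> \<Union>V" using z(2) unfolding V_def by blast
      qed
    qed
    show "pairwise disjnt V"
      unfolding pairwise_def disjnt_def
    proof (intro ballI impI)
      fix u1 u2 assume u1: "u1 \<in> V" and u2: "u2 \<in> V" and ne: "u1 \<noteq> u2"
      obtain x1 where x1: "x1 \<in> X" "f x1 = y" "u1 = st E x1" using u1 unfolding V_def by blast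
      obtain x2 where x2: "x2 \<in> X" "f x2 = y" "u2 = st E x2" using u2 unfolding V_def by blast
      show "u1 \<inter> u2 = {}"
      proof (rule ccontr)
        assume "u1 \<inter> u2 \<noteq> {}"
        then obtain t where t1: "t \<in> st E x1" and t2: "t \<in> st E x2" using x1 x2 by blast
        obtain F where F: "rips_simplex E F" "t \<in> geo_simplex F" using t1 by (auto simp: st_def elim: carrierE)
        have "x1 \<in> F" using t1 geo_simplexD(2)[OF F(2), of x1] by (force simp: st_def)
        moreover have "x2 \<in> F" using t2 geo_simplexD(2)[OF F(2), of x2] by (force simp: st_def)
        ultimately have "(x1,x1) \<in> E" "(x1,x2) \<in> E" using simplex_sub[OF F(1)] by auto
        then have "x1 = x2" using inj_E x1(2) x2(2) by metis
        then show False using ne x1 x2 by simp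
      qed
    qed
  qed
qed

end




definition edge :: "'a \<Rightarrow> 'a \<Rightarrow> real \<Rightarrow> ('a \<Rightarrow> real)" where
  "edge x a e = (\<lambda>z. (if z = x then 1 - e else 0) + (if z = a then e else 0))"

lemma edge_cont: "continuous_on UNIV (edge x a)"
  unfolding edge_def
proof (intro continuous_on_coordinatewise_then_product)
  fix z show "continuous_on UNIV (\<lambda>e. (if z = x then 1 - e else 0) + (if z = a then e else (0::real)))"
  proof (rule continuous_on_eq)
    show "continuous_on UNIV (\<lambda>e. (if z = x then 1 else 0) + ((if z = a then 1 else 0) - (if z = x then 1 else 0)) * (e::real))"
      by (intro continuous_on_add continuous_on_mult continuous_on_const continuous_on_id)
    fix e :: real
    show "(if z = x then 1 else 0) + ((if z = a then 1 else 0) - (if z = x then 1 else 0)) * e = (if z = x then 1 - e else 0) + (if z = a then e else (0::real))"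
      by (simp add: algebra_simps)
  qed
qed

lemma edge_geo: "0 \<le> e \<Longrightarrow> e \<le> 1 \<Longrightarrow> edge x a e \<in> geo_simplex {x,a}"
  unfolding geo_simplex_def edge_def
  by (cases "a = x") auto

lemma edge_simplex: "{x,a} \<times> {x,a} \<subseteq> E \<Longrightarrow> rips_simplex E {x,a}"
  unfolding rips_simplex_def by (intro conjI) (simp_all only: finite.emptyI finite.insertI insert_not_empty not_False_eq_True)

lemma edge0: "edge x a 0 = (\<lambda>z. if z = x then 1 else 0)"
  unfolding edge_def by auto

lemma edge_near:
  assumes U: "openin (rips_top E) U" and xa: "{x,a} \<times> {x,a} \<subseteq> E"
    and d: "(\<lambda>z. if z = x then 1 else 0) \<in> U"
  shows "\<exists>d>0. \<forall>e. 0 \<le> e \<and> e < d \<longrightarrow> edge x a e \<in> U"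
proof -
  have "openin (top_of_set (geo_simplex {x,a})) (U \<inter> geo_simplex {x,a})"
    using U edge_simplex[OF xa] openin_rips by blast
  moreover have "edge x a 0 \<in> U \<inter> geo_simplex {x,a}" using d edge_geo[of 0 x a] edge0[of x a] by simp
  ultimately have "\<exists>d>0. \<forall>e. 0 \<le> e \<and> e < d \<and> edge x a e \<in> geo_simplex {x,a} \<longrightarrow> edge x a e \<in> U \<inter> geo_simplex {x,a}"
    by (rule path_in_open[OF _ edge_cont])
  then obtain d where d: "d > 0" "\<forall>e. 0 \<le> e \<and> e < d \<and> edge x a e \<in> geo_simplex {x,a} \<longrightarrow> edge x a e \<in> U \<inter> geo_simplex {x,a}"
    by blast
  show ?thesis
  proof (intro exI[of _ "min d 1"] conjI allI impI)
    show "0 < min d 1" using d by simp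
    fix e assume e: "0 \<le> e \<and> e < min d 1"
    then have "edge x a e \<in> geo_simplex {x,a}" using edge_geo[of e x a] by simp
    then have "edge x a e \<in> U \<inter> geo_simplex {x,a}" using d(2) e by simp
    then show "edge x a e \<in> U" by blast
  qed
qed

lemma edge_map:
  assumes "0 \<le> e" "e \<le> 1"
  shows "rips_map f (edge x a e) = (\<lambda>y. (if f x = y then 1 - e else 0) + (if f a = y then e else 0))"
proof (rule ext)
  fix y
  have "rips_map f (edge x a e) y = (\<Sum>z\<in>{z\<in>{x,a}. f z = y}. edge x a e z)"
    by (rule rips_map_eq) (auto simp: edge_def)
  also have "\<dots> = (\<Sum>z\<in>{z\<in>{x,a}. f z = y}. (if z = x then 1 - e else 0)) + (\<Sum>z\<in>{z\<in>{x,a}. f z = y}. (if z = a then e else 0))"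
    unfolding edge_def by (rule sum.distrib)
  also have "\<dots> = (if f x = y then 1 - e else 0) + (if f a = y then e else 0)"
    by (simp add: sum.delta)
  finally show "rips_map f (edge x a e) y = (if f x = y then 1 - e else 0) + (if f a = y then e else 0)" .
qed




lemma delta_geo: "(\<lambda>z. if z = x then 1 else 0) \<in> geo_simplex {x}"
  unfolding geo_simplex_def by auto

lemma cover_evenly:
  assumes EX: "E \<subseteq> X \<times> X" and symE: "sym E" and IdE: "Id_on X \<subseteq> E"
    and cov: "simplicial_covering f E"
  shows "evenly_covers X f E"
  unfolding evenly_covers_def
proof (intro ballI)
  fix x assume x: "x \<in> X"
  have xx: "(x,x) \<in> E" using x IdE by (auto simp: Id_on_def)
  define dx where "dx = (\<lambda>z. if z = x then 1 else (0::real))"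
  have sx: "rips_simplex E {x}" using xx by (simp add: rips_simplex_def)
  have "dx \<in> geo_simplex {x}" unfolding dx_def by (rule delta_geo)
  then have dxc: "dx \<in> rips_carrier E" by (rule subsetD[OF geo_sub_carrier[OF sx]])
  have pdx: "rips_map f dx = (\<lambda>y. if y = f x then 1 else 0)"
  proof (rule ext)
    fix y
    have "rips_map f dx y = (\<Sum>z\<in>{z\<in>{x}. f z = y}. dx z)"
      by (rule rips_map_eq) (auto simp: dx_def)
    also have "\<dots> = (if y = f x then 1 else 0)"
    proof (cases "f x = y")
      case True
      then have "{z\<in>{x}. f z = y} = {x}" by auto
      then show ?thesis using True by (simp add: dx_def)
    next
      case False
      then have "{z\<in>{x}. f z = y} = {}" by auto
      then show ?thesis using False by (simp only:) simp
    qed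
    finally show "rips_map f dx y = (if y = f x then 1 else 0)" .
  qed
  note C = cov[unfolded simplicial_covering_def covering_map_top_def]
  note C2 = conjunct1[OF conjunct2[OF C]]
  note C3 = conjunct2[OF conjunct2[OF C]]
  have "rips_map f dx \<in> rips_map f ` topspace (rips_top E)" using dxc by simp
  then have mem: "rips_map f dx \<in> topspace (rips_top (pimg f E))" using C2 by simp
  from bspec[OF C3 mem] obtain W where WW: "rips_map f dx \<in> W \<and> openin (rips_top (pimg f E)) W \<and>
      (\<exists>V. \<Union>V = topspace (rips_top E) \<inter> rips_map f -` W \<and> (\<forall>u\<in>V. openin (rips_top E) u) \<and> pairwise disjnt V \<and>
             (\<forall>u\<in>V. homeomorphic_map (subtopology (rips_top E) u) (subtopology (rips_top (pimg f E)) W) (rips_map f)))" ..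
  note W = conjunct1[OF WW] conjunct1[OF conjunct2[OF WW]]
  note EV = conjunct2[OF conjunct2[OF WW]]
  from EV obtain V where VV: "\<Union>V = topspace (rips_top E) \<inter> rips_map f -` W \<and> (\<forall>u\<in>V. openin (rips_top E) u) \<and> pairwise disjnt V \<and>
             (\<forall>u\<in>V. homeomorphic_map (subtopology (rips_top E) u) (subtopology (rips_top (pimg f E)) W) (rips_map f))" ..
  note V = conjunct1[OF VV] conjunct1[OF conjunct2[OF VV]] conjunct2[OF conjunct2[OF conjunct2[OF VV]]]
  have "dx \<in> \<Union>V" using V(1) dxc W(1) by simp
  then obtain u where u: "u \<in> V" "dx \<in> u" by blast
  have uo: "openin (rips_top E) u" using V(2) u by blast
  have dxu: "(\<lambda>z. if z = x then 1 else (0::real)) \<in> u" using u(2) unfolding dx_def .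
  have hu: "homeomorphic_map (subtopology (rips_top E) u) (subtopology (rips_top (pimg f E)) W) (rips_map f)"
    using V(3) u by blast
  have injp: "inj_on (rips_map f) (rips_carrier E \<inter> u)"
    using homeomorphic_imp_injective_map[OF hu] by simp
  have ballsub: "f ` uball x E \<subseteq> uball (f x) (pimg f E)"
    unfolding uball_def pimg_def by auto
  have edgeE: "{x,a} \<times> {x,a} \<subseteq> E" if "(x,a) \<in> E" for a
  proof -
    have "a \<in> X" using that EX by auto
    then have "(a,a) \<in> E" using IdE by (auto simp: Id_on_def)
    moreover have "(a,x) \<in> E" using that symE by (auto simp: sym_def)
    ultimately show ?thesis using that xx by auto
  qed
  have inj: "inj_on f (uball x E)"
  proof (rule inj_onI)
    fix a b assume a: "a \<in> uball x E" and b: "b \<in> uball x E" and fab: "f a = f b"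
    show "a = b"
    proof (rule ccontr)
      assume ne: "a \<noteq> b"
      have ea: "{x,a} \<times> {x,a} \<subseteq> E" using a edgeE by (simp add: uball_def)
      have eb: "{x,b} \<times> {x,b} \<subseteq> E" using b edgeE by (simp add: uball_def)
      obtain da where da: "da > 0" "\<forall>e. 0 \<le> e \<and> e < da \<longrightarrow> edge x a e \<in> u"
        using edge_near[OF uo ea dxu] by blast
      obtain db where db: "db > 0" "\<forall>e. 0 \<le> e \<and> e < db \<longrightarrow> edge x b e \<in> u"
        using edge_near[OF uo eb dxu] by blast
      define e where "e = min (min da db) 1 / 2"
      have e: "0 < e" "e < da" "e < db" "e < 1" using da db by (auto simp: e_def)
      have ia: "edge x a e \<in> rips_carrier E \<inter> u"
        using da(2) e edge_geo[of e x a] geo_sub_carrier[OF edge_simplex[OF ea]] by auto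
      have ib: "edge x b e \<in> rips_carrier E \<inter> u"
        using db(2) e edge_geo[of e x b] geo_sub_carrier[OF edge_simplex[OF eb]] by auto
      have "rips_map f (edge x a e) = rips_map f (edge x b e)"
        using edge_map[of e f x a] edge_map[of e f x b] e fab by simp
      then have "edge x a e = edge x b e" using injp ia ib by (meson inj_onD)
      then have "edge x a e a = edge x b e a" by simp
      then show False using ne e(1) by (simp add: edge_def split: if_splits)
    qed
  qed
  have surj: "uball (f x) (pimg f E) \<subseteq> f ` uball x E"
  proof
    fix g assume g: "g \<in> uball (f x) (pimg f E)"
    then have fg: "(f x, g) \<in> pimg f E" by (simp add: uball_def)
    then obtain a0 b0 where ab0: "(a0,b0) \<in> E" "f a0 = f x" "f b0 = g" unfolding pimg_def by auto
    show "g \<in> f ` uball x E"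
    proof (cases "g = f x")
      case True
      then show ?thesis using xx by (auto simp: uball_def)
    next
      case False
      have b0X: "b0 \<in> X" using ab0 EX by auto
      have "(f x, f x) \<in> pimg f E" unfolding pimg_def by (rule image_eqI[of _ _ "(x,x)"]) (simp_all add: xx)
      moreover have "(b0,b0) \<in> E" using b0X IdE by (auto simp: Id_on_def)
      then have "(g, g) \<in> pimg f E" unfolding pimg_def by (intro image_eqI[of _ _ "(b0,b0)"]) (simp_all add: ab0(3))
      moreover have "(b0,a0) \<in> E" using ab0(1) symE by (auto simp: sym_def)
      then have "(g, f x) \<in> pimg f E" unfolding pimg_def by (intro image_eqI[of _ _ "(b0,a0)"]) (simp_all add: ab0(2,3))
      ultimately have GG: "{f x, g} \<times> {f x, g} \<subseteq> pimg f E" using fg by auto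
      define u' where "u' = u \<inter> st E x"
      have u'o: "openin (rips_top E) u'" unfolding u'_def using openin_Int[OF uo st_open] by simp
      have "0 < dx x" by (simp add: dx_def)
      then have dxu': "dx \<in> u'" using u(2) dxc unfolding u'_def st_def by blast
      have "u \<inter> st E x = st E x \<inter> u" by (rule Int_commute)
      then have "openin (subtopology (rips_top E) u) u'"
        unfolding openin_subtopology u'_def using st_open by (intro exI conjI)
      then have "openin (subtopology (rips_top (pimg f E)) W) (rips_map f ` u')"
        using homeomorphic_imp_open_map[OF hu] by (simp add: open_map_def)
      then have po: "openin (rips_top (pimg f E)) (rips_map f ` u')"
        using W(2) by (rule openin_trans_full)
      have "rips_map f dx \<in> rips_map f ` u'" using dxu' by (rule imageI)
      then have "(\<lambda>y. if y = f x then 1 else 0) \<in> rips_map f ` u'" unfolding pdx .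
      then have "\<exists>d>0. \<forall>e. 0 \<le> e \<and> e < d \<longrightarrow> edge (f x) g e \<in> rips_map f ` u'"
        by (rule edge_near[OF po GG])
      then obtain d where d: "d > 0" "\<forall>e. 0 \<le> e \<and> e < d \<longrightarrow> edge (f x) g e \<in> rips_map f ` u'"
        by (elim exE conjE) (rule that)
      define e where "e = min d 1 / 2"
      have e: "0 < e" "e < d" "e < 1" using d by (auto simp: e_def)
      then have "edge (f x) g e \<in> rips_map f ` u'" using d(2) by simp
      then obtain t where t0: "edge (f x) g e = rips_map f t" "t \<in> u'" by (rule imageE)
      then have t: "t \<in> u'" "rips_map f t = edge (f x) g e" by simp_all
      have tst: "t \<in> st E x" using t(1) by (simp add: u'_def)
      obtain F where F: "rips_simplex E F" "t \<in> geo_simplex F" using tst by (auto simp: st_def elim: carrierE)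
      note tD = geo_simplexD[OF F(2)]
      have fin: "finite F" using F by (simp add: rips_simplex_def)
      have xF: "x \<in> F" using tst tD(2)[of x] by (cases "x \<in> F") (auto simp: st_def)
      have "rips_map f t g = e" using t(2) False by (simp add: edge_def)
      then have "(\<Sum>z\<in>{z\<in>F. f z = g}. t z) = e" using rips_map_eq[OF fin tD(2), where f=f and y=g] by simp
      then have "{z\<in>F. f z = g} \<noteq> {}" using e(1) by (metis less_irrefl sum.empty)
      then obtain z where z: "z \<in> F" "f z = g" by blast
      have "(x,z) \<in> E" using F(1) xF z(1) by (auto simp: rips_simplex_def)
      then show ?thesis using z(2) by (auto simp: uball_def)
    qed
  qed
  show "bij_betw f (uball x E) (uball (f x) (pimg f E))"
    unfolding bij_betw_def using inj ballsub surj by blast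
qed


theorem mainTheorem1:
  fixes X :: "'a set" and UX :: "('a \<times> 'a) set set"
    and Y :: "'b set" and UY :: "('b \<times> 'b) set set" and f :: "'a \<Rightarrow> 'b"
  assumes "uniform_structure X UX" and "uniform_structure Y UY"
    and "generates_uniformity X UX f Y UY"
  shows "uniform_covering_map X UX f Y UY \<longleftrightarrow>
         (\<exists>B. is_base UX B \<and> (\<forall>E\<in>B. evenly_covers X f E))"
proof
  have US: "\<forall>E\<in>UX. E \<subseteq> X \<times> X \<and> sym E \<and> Id_on X \<subseteq> E"
    using assms(1) unfolding uniform_structure_def by (rule conjunct1)
  have UC: "\<forall>G1\<in>UX. \<exists>G\<in>UX. G O G \<subseteq> G1"
    using assms(1) unfolding uniform_structure_def by (elim conjE)
  have ent: "E \<subseteq> X \<times> X \<and> sym E \<and> Id_on X \<subseteq> E" if "E \<in> UX" for E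
    using US that by (rule bspec)
  have comp: "\<exists>G\<in>UX. G O G \<subseteq> E" if "E \<in> UX" for E
    using UC that by (rule bspec)
  {
    assume "uniform_covering_map X UX f Y UY"
    then have base: "is_base UX {E \<in> UX. simplicial_covering f E}"
      unfolding uniform_covering_map_def by blast
    have "\<forall>E\<in>{E \<in> UX. simplicial_covering f E}. evenly_covers X f E"
    proof
      fix E assume "E \<in> {E \<in> UX. simplicial_covering f E}"
      then have E: "E \<in> UX" "simplicial_covering f E" by auto
      show "evenly_covers X f E"
      proof (rule cover_evenly)
        show "E \<subseteq> X \<times> X" "sym E" "Id_on X \<subseteq> E" using ent[OF E(1)] by simp_all
        show "simplicial_covering f E" by (rule E(2))
      qed
    qed
    then show "\<exists>B. is_base UX B \<and> (\<forall>E\<in>B. evenly_covers X f E)" using base by blast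
  }
  assume "\<exists>B. is_base UX B \<and> (\<forall>E\<in>B. evenly_covers X f E)"
  then obtain B where B: "is_base UX B" "\<forall>E\<in>B. evenly_covers X f E" by blast
  have "is_base UX {E \<in> UX. simplicial_covering f E}"
    unfolding is_base_def
  proof (intro conjI ballI)
    show "{E \<in> UX. simplicial_covering f E} \<subseteq> UX" by blast
    fix U assume U: "U \<in> UX"
    obtain E where E: "E \<in> B" "E \<subseteq> U" using B(1) U unfolding is_base_def by blast
    have EU: "E \<in> UX" using B(1) E(1) unfolding is_base_def by blast
    obtain G where G: "G \<in> UX" "G O G \<subseteq> E" using comp[OF EU] by blast
    obtain E1 where E1: "E1 \<in> B" "E1 \<subseteq> G" using B(1) G(1) unfolding is_base_def by blast
    have E1U: "E1 \<in> UX" using B(1) E1(1) unfolding is_base_def by blast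
    have E1E: "E1 O E1 \<subseteq> E" using relcomp_mono[OF E1(2) E1(2)] G(2) by blast
    note en1 = ent[OF E1U]
    have E1sub: "E1 \<subseteq> E1 O E1"
    proof
      fix p assume p: "p \<in> E1"
      obtain a b where ab: "p = (a,b)" by (cases p)
      then have "b \<in> X" using p en1 by blast
      then have "(b,b) \<in> E1" using en1 by (auto simp: Id_on_def)
      then show "p \<in> E1 O E1" using p ab by blast
    qed
    have "evc X f E1 E"
      unfolding evc_def
    proof (intro conjI)
      show "E1 \<subseteq> X \<times> X" "sym E1" "Id_on X \<subseteq> E1" using en1 by simp_all
      show "E1 O E1 \<subseteq> E" by (rule E1E)
      show "evenly_covers X f E1" using B(2) E1(1) by (rule bspec)
      show "evenly_covers X f E" using B(2) E(1) by (rule bspec)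
    qed
    then have "simplicial_covering f E1" by (rule evc.covering)
    moreover have "E1 \<subseteq> U" using E1sub E1E E(2) by blast
    ultimately show "\<exists>E'\<in>{E \<in> UX. simplicial_covering f E}. E' \<subseteq> U" using E1U by blast
  qed
  then show "uniform_covering_map X UX f Y UY"
    unfolding uniform_covering_map_def using assms(3) by blast
qed

end
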